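(* Let $F$ be an almost-bipartite graph. Every graph in $\mathcal{M}_F$ is either an empty (edgeless) graph, or a non-empty graph with fewer than $|F|$ vertices. In particular, up to isomorphism there are only finitely many non-empty graphs in $\mathcal{M}_F$.
   Context: All graphs are finite and simple. A graph $F$ is almost-bipartite if it can be made bipartite by removing at most one edge. For such $F$, $\mathcal{A}_F$ is the family of subgraphs of $F$ induced by $V(F)\setminus I$, where $I$ ranges over all maximal independent sets of $F$; $\mathcal{M}_F$ is the family of all graphs (possibly with isolated vertices) that contain no subgraph isomorphic to any member of $\mathcal{A}_F$. $|F|$ is the number of vertices of $F$. *)

theory Defs
  imports Main
begin

definition graph :: "'a set \<Rightarrow> 'a set set \<Rightarrow> bool" where
  "graph V E \<longleftrightarrow> finite V \<and> (\<forall>e\<in>E. e \<subseteq> V \<and> card e = 2)"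

definition bipartite :: "'a set \<Rightarrow> 'a set set \<Rightarrow> bool" where
  "bipartite V E \<longleftrightarrow> (\<exists>A. A \<subseteq> V \<and> (\<forall>e\<in>E. card (e \<inter> A) = 1))"

definition almost_bipartite :: "'a set \<Rightarrow> 'a set set \<Rightarrow> bool" where
  "almost_bipartite V E \<longleftrightarrow> bipartite V E \<or> (\<exists>e\<in>E. bipartite V (E - {e}))"

definition independent :: "'a set \<Rightarrow> 'a set set \<Rightarrow> 'a set \<Rightarrow> bool" where
  "independent V E I \<longleftrightarrow> I \<subseteq> V \<and> (\<forall>e\<in>E. \<not> e \<subseteq> I)"

definition maximal_independent :: "'a set \<Rightarrow> 'a set set \<Rightarrow> 'a set \<Rightarrow> bool" where
  "maximal_independent V E I \<longleftrightarrow> independent V E I \<and>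
     (\<forall>J. independent V E J \<and> I \<subseteq> J \<longrightarrow> J = I)"

definition induced_edges :: "'a set set \<Rightarrow> 'a set \<Rightarrow> 'a set set" where
  "induced_edges E S = {e\<in>E. e \<subseteq> S}"

definition contains_copy :: "'b set \<Rightarrow> 'b set set \<Rightarrow> 'a set \<Rightarrow> 'a set set \<Rightarrow> bool" where
  "contains_copy V E W D \<longleftrightarrow>
     (\<exists>f. inj_on f W \<and> f ` W \<subseteq> V \<and> (\<forall>e\<in>D. f ` e \<in> E))"

definition A_family :: "'a set \<Rightarrow> 'a set set \<Rightarrow> ('a set \<times> 'a set set) set" where
  "A_family VF EF = {(VF - I, induced_edges EF (VF - I)) | I. maximal_independent VF EF I}"

definition in_M :: "'a set \<Rightarrow> 'a set set \<Rightarrow> 'b set \<Rightarrow> 'b set set \<Rightarrow> bool" where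
  "in_M VF EF V E \<longleftrightarrow> graph V E \<and> (\<forall>(W, D)\<in>A_family VF EF. \<not> contains_copy V E W D)"

definition graph_iso :: "'a set \<Rightarrow> 'a set set \<Rightarrow> 'b set \<Rightarrow> 'b set set \<Rightarrow> bool" where
  "graph_iso V E W D \<longleftrightarrow> (\<exists>f. bij_betw f V W \<and>
     (\<forall>x\<in>V. \<forall>y\<in>V. {x, y} \<in> E \<longleftrightarrow> {f x, f y} \<in> D))"

end

theory Submission
  imports Defs
begin

lemma extend_inj:
  assumes "finite W" "finite V" "S \<subseteq> W" "inj_on h S" "h ` S \<subseteq> V" "card W \<le> card V"
  shows "\<exists>f. inj_on f W \<and> f ` W \<subseteq> V \<and> (\<forall>z\<in>S. f z = h z)"
proof -
  have fS: "finite S" using assms finite_subset by blast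
  have c1: "card (W - S) = card W - card S" using assms fS by (simp add: card_Diff_subset)
  have c2: "card (V - h ` S) = card V - card S"
    using assms fS by (simp add: card_Diff_subset card_image finite_subset)
  have "card (W - S) \<le> card (V - h ` S)" using c1 c2 assms by simp
  then obtain g where g: "g ` (W - S) \<subseteq> V - h ` S" "inj_on g (W - S)"
    using card_le_inj[of "W - S" "V - h ` S"] assms by auto
  define f where "f = (\<lambda>z. if z \<in> S then h z else g z)"
  have "inj_on f W"
  proof (rule inj_onI)
    fix x y assume xy: "x \<in> W" "y \<in> W" "f x = f y"
    show "x = y"
    proof (cases "x \<in> S"; cases "y \<in> S")
      assume "x \<in> S" "y \<in> S" then show ?thesis using xy assms(4) unfolding f_def by (simp add: inj_on_def)
    next
      assume "x \<notin> S" "y \<notin> S" then show ?thesis using xy g(2) unfolding f_def by (simp add: inj_on_def)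
    next
      assume "x \<in> S" "y \<notin> S" then show ?thesis using xy g(1) unfolding f_def by auto
    next
      assume "x \<notin> S" "y \<in> S" then show ?thesis using xy g(1) unfolding f_def by auto
    qed
  qed
  moreover have "f ` W \<subseteq> V" unfolding f_def using g assms by auto
  moreover have "\<forall>z\<in>S. f z = h z" unfolding f_def by simp
  ultimately show ?thesis by blast
qed

lemma key_X:
  assumes "graph VF EF" "almost_bipartite VF EF"
  shows "\<exists>X e0. independent VF EF X \<and> induced_edges EF (VF - X) \<subseteq> {e0}"
proof -
  have c2: "\<And>e. e \<in> EF \<Longrightarrow> card e = 2 \<and> e \<subseteq> VF" using assms(1) unfolding graph_def by auto
  have fin: "\<And>e. e \<in> EF \<Longrightarrow> finite e" using c2 by (metis card.infinite zero_neq_numeral)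
  have bip: "\<exists>X e0. independent VF EF X \<and> induced_edges EF (VF - X) \<subseteq> {e0}" if bp: "bipartite VF EF"
  proof -
    obtain A where A: "A \<subseteq> VF" "\<forall>e\<in>EF. card (e \<inter> A) = 1" using bp unfolding bipartite_def by blast
    have "independent VF EF (VF - A)" unfolding independent_def
    proof safe
      fix e assume "e \<in> EF" "e \<subseteq> VF - A"
      then have "e \<inter> A = {}" by auto
      then have "card (e \<inter> A) = 0" by simp
      moreover have "card (e \<inter> A) = 1" using A(2) \<open>e \<in> EF\<close> by blast
      ultimately show False by simp
    qed
    moreover have "induced_edges EF (VF - (VF - A)) \<subseteq> {undefined}"
      unfolding induced_edges_def
    proof (rule subsetI)
      fix e assume "e \<in> {e \<in> EF. e \<subseteq> VF - (VF - A)}"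
      hence "e \<in> EF" "e \<subseteq> VF - (VF - A)" by auto
      then have "e \<inter> A = e" by auto
      moreover have "card (e \<inter> A) = 1" using A(2) \<open>e \<in> EF\<close> by blast
      ultimately have "card e = 1" by simp
      then show "e \<in> {undefined}" using c2[OF \<open>e \<in> EF\<close>] by simp
    qed
    ultimately show ?thesis by (intro exI conjI)
  qed
  show ?thesis
  proof (cases "bipartite VF EF")
    case True then show ?thesis using bip by simp
  next
    case False
    then obtain e0 A where e0: "e0 \<in> EF" and A: "A \<subseteq> VF" "\<forall>e\<in>EF - {e0}. card (e \<inter> A) = 1"
      using assms(2) unfolding almost_bipartite_def bipartite_def by (elim disjE bexE exE conjE) auto
    have ne1: "card (e0 \<inter> A) \<noteq> 1"
    proof
      assume "card (e0 \<inter> A) = 1"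
      then have "\<forall>e\<in>EF. card (e \<inter> A) = 1" using A(2) by blast
      then have "bipartite VF EF" unfolding bipartite_def using A(1) by blast
      then show False using False by simp
    qed
    have fe0: "finite e0" "card e0 = 2" "e0 \<subseteq> VF" using fin c2 e0 by auto
    have "card (e0 \<inter> A) \<le> 2" using fe0 by (metis card_mono inf_le1)
    then consider "card (e0 \<inter> A) = 0" | "card (e0 \<inter> A) = 2" using ne1 by linarith
    then show ?thesis
    proof cases
      case 1
      then have e0A: "e0 \<inter> A = {}" using fe0 by simp
      have "independent VF EF (A \<inter> VF)" unfolding independent_def
      proof safe
        fix e assume "e \<in> EF" "e \<subseteq> A \<inter> VF"
        have eA: "e \<inter> A = e" using \<open>e \<subseteq> A \<inter> VF\<close> by auto
        show False
        proof (cases "e = e0")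
          case True then have "e0 = {}" using eA e0A by simp
          then show False using fe0 by simp
        next
          case False then have "card (e \<inter> A) = 1" using A(2) \<open>e \<in> EF\<close> by blast
          then show False using eA c2[OF \<open>e \<in> EF\<close>] by simp
        qed
      qed
      moreover have "induced_edges EF (VF - (A \<inter> VF)) \<subseteq> {e0}"
        unfolding induced_edges_def
      proof (rule subsetI)
        fix e assume "e \<in> {e \<in> EF. e \<subseteq> VF - (A \<inter> VF)}"
        hence "e \<in> EF" "e \<subseteq> VF - (A \<inter> VF)" by auto
        then have "e \<inter> A = {}" by auto
        have "e = e0"
        proof (rule ccontr)
          assume "e \<noteq> e0" then have "card (e \<inter> A) = 1" using A(2) \<open>e \<in> EF\<close> by blast
          then show False using \<open>e \<inter> A = {}\<close> by simp
        qed
        then show "e \<in> {e0}" by simp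
      qed
      ultimately show ?thesis by (intro exI conjI)
    next
      case 2
      then have e0A: "e0 \<subseteq> A" using fe0
        using card_subset_eq[of e0 "e0 \<inter> A"] by auto
      have "independent VF EF (VF - A)" unfolding independent_def
      proof safe
        fix e assume "e \<in> EF" "e \<subseteq> VF - A"
        then have "e \<inter> A = {}" by auto
        show False
        proof (cases "e = e0")
          case True then have "e0 = {}" using \<open>e \<inter> A = {}\<close> e0A by auto
          then show False using fe0 by simp
        next
          case False then have "card (e \<inter> A) = 1" using A(2) \<open>e \<in> EF\<close> by blast
          then show False using \<open>e \<inter> A = {}\<close> by simp
        qed
      qed
      moreover have "induced_edges EF (VF - (VF - A)) \<subseteq> {e0}"
        unfolding induced_edges_def
      proof (rule subsetI)
        fix e assume "e \<in> {e \<in> EF. e \<subseteq> VF - (VF - A)}"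
        hence "e \<in> EF" "e \<subseteq> VF - (VF - A)" by auto
        then have "e \<inter> A = e" by auto
        have "e = e0"
        proof (rule ccontr)
          assume "e \<noteq> e0" then have "card (e \<inter> A) = 1" using A(2) \<open>e \<in> EF\<close> by blast
          then show False using \<open>e \<inter> A = e\<close> c2[OF \<open>e \<in> EF\<close>] by simp
        qed
        then show "e \<in> {e0}" by simp
      qed
      ultimately show ?thesis by (intro exI conjI)
    qed
  qed
qed

lemma extend_max:
  assumes "finite VF" "independent VF EF X"
  shows "\<exists>I. maximal_independent VF EF I \<and> X \<subseteq> I"
proof -
  define C where "C = {J. independent VF EF J \<and> X \<subseteq> J}"
  have fC: "finite C" unfolding C_def independent_def
    by (rule finite_subset[of _ "Pow VF"]) (auto simp: assms(1))
  have neC: "C \<noteq> {}" using assms unfolding C_def by auto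
  define m where "m = Max (card ` C)"
  have "m \<in> card ` C" unfolding m_def using fC neC by simp
  then obtain I where I: "I \<in> C" "card I = m" by auto
  have le: "\<And>J. J \<in> C \<Longrightarrow> card J \<le> m" unfolding m_def using fC by simp
  have "maximal_independent VF EF I" unfolding maximal_independent_def
  proof safe
    show "independent VF EF I" using I unfolding C_def by simp
  next
    fix J x assume J: "independent VF EF J" "I \<subseteq> J" "x \<in> J"
    have "J \<in> C" using J I unfolding C_def by auto
    moreover have "finite J" using J assms(1) unfolding independent_def using finite_subset by blast
    ultimately have "card J \<le> card I" using le I by simp
    moreover have "card I \<le> card J" using J(2) \<open>finite J\<close> card_mono by blast
    ultimately have "I = J" using card_subset_eq[of J I] J(2) \<open>finite J\<close> by simp
    then show "x \<in> I" using J by simp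
  qed
  then show ?thesis using I unfolding C_def by auto
qed

lemma copy_lemma:
  assumes "graph VF EF" "graph V E" "E \<noteq> {}" "card VF \<le> card V" "W \<subseteq> VF"
    "induced_edges EF W \<subseteq> {e0}"
  shows "contains_copy V E W (induced_edges EF W)"
proof -
  have fW: "finite W" "finite V" "card W \<le> card V" using assms unfolding graph_def
    by (auto intro: finite_subset card_mono order.trans)
  show ?thesis
  proof (cases "induced_edges EF W = {}")
    case True
    obtain f where "f ` W \<subseteq> V \<and> inj_on f W"
      using card_le_inj[of W V] fW by auto
    then show ?thesis unfolding contains_copy_def using True by blast
  next
    case False
    then have D: "induced_edges EF W = {e0}" using assms(6) by blast
    then have "e0 \<in> EF" "e0 \<subseteq> W" unfolding induced_edges_def by auto
    then obtain x y where xy: "e0 = {x, y}" "x \<noteq> y"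
      using assms(1) unfolding graph_def by (metis card_2_iff)
    obtain e1 where "e1 \<in> E" using assms(3) by blast
    then obtain p q where pq: "e1 = {p, q}" "p \<noteq> q"
      using assms(2) unfolding graph_def by (metis card_2_iff)
    have pqV: "p \<in> V" "q \<in> V" using assms(2) \<open>e1 \<in> E\<close> pq unfolding graph_def by auto
    define h where "h = (\<lambda>z. if z = x then p else q)"
    have "inj_on h {x, y}" unfolding h_def using xy pq by (auto simp: inj_on_def)
    moreover have "h ` {x, y} \<subseteq> V" unfolding h_def using pqV by auto
    ultimately obtain f where f: "inj_on f W" "f ` W \<subseteq> V" "\<forall>z\<in>{x,y}. f z = h z"
      using extend_inj[of W V "{x,y}" h] fW \<open>e0 \<subseteq> W\<close> xy by auto
    have "f ` e0 = e1" using f xy pq unfolding h_def by auto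
    then show ?thesis unfolding contains_copy_def using D f \<open>e1 \<in> E\<close> by auto
  qed
qed

theorem lemma4p1:
  fixes VF :: "'a set" and EF :: "'a set set"
  assumes "graph VF EF" and "almost_bipartite VF EF"
  shows "(\<forall>(V :: 'b set) E. in_M VF EF V E \<longrightarrow> E = {} \<or> card V < card VF)
    \<and> (\<exists>S :: (nat set \<times> nat set set) set. finite S \<and>
         (\<forall>(V :: 'b set) E. in_M VF EF V E \<and> E \<noteq> {} \<longrightarrow>
            (\<exists>(W, D)\<in>S. graph_iso V E W D)))"
proof -
  have finVF: "finite VF" using assms(1) unfolding graph_def by simp
  obtain X e0 where X: "independent VF EF X" "induced_edges EF (VF - X) \<subseteq> {e0}"
    using key_X[OF assms] by blast
  obtain I where I: "maximal_independent VF EF I" "X \<subseteq> I" using extend_max[OF finVF X(1)] by blast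
  have Isub: "induced_edges EF (VF - I) \<subseteq> {e0}" using X(2) I(2) unfolding induced_edges_def by auto
  have AF: "(VF - I, induced_edges EF (VF - I)) \<in> A_family VF EF" unfolding A_family_def using I(1) by blast
  have part1: "\<forall>(V::'b set) E. in_M VF EF V E \<longrightarrow> E = {} \<or> card V < card VF"
  proof (intro allI impI)
    fix V :: "'b set" and E assume M: "in_M VF EF V E"
    show "E = {} \<or> card V < card VF"
    proof (rule ccontr)
      assume "\<not> (E = {} \<or> card V < card VF)"
      then have "E \<noteq> {}" "card VF \<le> card V" by auto
      have "graph V E" using M unfolding in_M_def by simp
      have "contains_copy V E (VF - I) (induced_edges EF (VF - I))"
        by (rule copy_lemma[OF assms(1) \<open>graph V E\<close> \<open>E \<noteq> {}\<close> \<open>card VF \<le> card V\<close> _ Isub]) auto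
      moreover have "\<not> contains_copy V E (VF - I) (induced_edges EF (VF - I))"
        using M AF unfolding in_M_def by blast
      ultimately show False by simp
    qed
  qed
  define n where "n = card VF"
  define S where "S = ({(W, D). W \<subseteq> {0..<n} \<and> D \<subseteq> Pow W} :: (nat set \<times> nat set set) set)"
  have "finite S"
    by (rule finite_subset[of _ "Pow {0..<n} \<times> Pow (Pow {0..<n})"]) (auto simp: S_def)
  moreover have "\<forall>(V::'b set) E. in_M VF EF V E \<and> E \<noteq> {} \<longrightarrow> (\<exists>(W, D)\<in>S. graph_iso V E W D)"
  proof (intro allI impI)
    fix V :: "'b set" and E assume M: "in_M VF EF V E \<and> E \<noteq> {}"
    then have lt: "card V < n" using part1 n_def by blast
    have G: "graph V E" using M unfolding in_M_def by simp
    then have "finite V" unfolding graph_def by simp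
    then obtain h where h: "bij_betw h V {0..<card V}" using ex_bij_betw_finite_nat by blast
    define D where "D = (\<lambda>e. h ` e) ` E"
    have "D \<subseteq> Pow {0..<card V}" unfolding D_def using G h
      by (auto simp: graph_def bij_betw_def)
    then have inS: "({0..<card V}, D) \<in> S" unfolding S_def using lt by auto
    have "graph_iso V E {0..<card V} D" unfolding graph_iso_def
    proof (intro exI conjI ballI)
      show "bij_betw h V {0..<card V}" by (rule h)
      fix x y assume xy: "x \<in> V" "y \<in> V"
      show "{x, y} \<in> E \<longleftrightarrow> {h x, h y} \<in> D"
      proof
        assume "{x,y} \<in> E"
        then have "h ` {x,y} \<in> D" unfolding D_def by (rule imageI)
        then show "{h x, h y} \<in> D" by simp
      next
        assume "{h x, h y} \<in> D"
        then obtain e where e: "e \<in> E" "h ` e = h ` {x,y}" unfolding D_def by auto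
        have "e \<subseteq> V" using G e(1) unfolding graph_def by auto
        then have "e = {x,y}" using e(2) xy h inj_on_image_eq_iff[of h V e "{x,y}"]
          unfolding bij_betw_def by auto
        then show "{x,y} \<in> E" using e by simp
      qed
    qed
    then show "\<exists>(W, D)\<in>S. graph_iso V E W D" using inS by blast
  qed
  ultimately show ?thesis using part1 by blast
qed

end
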